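(* Let $g\ge1$, $n=g+1$, $k\in\{1,\dots,g\}$, $\kappa_1,\dots,\kappa_n\in\mathbb C$ pairwise distinct, $\beta_1,\dots,\beta_g\in\mathbb C^*$, $\beta_0:=1$, $I_k=\{1,\dots,k\}$, and let $A$ be the $k\times n$ matrix with $A_{ij}=\delta_{ij}$ for $j\le k$ and $A_{ij}=\frac{\beta_{i-1}}{\beta_{j-1}(\kappa_j-\kappa_i)^2}\prod_{l\in I_k,l\ne i}\frac{\kappa_i-\kappa_l}{\kappa_j-\kappa_l}$ for $i\le k<j$. Then the matroid of $A$ (whose bases are the $k$-subsets $J\subset[n]$ with nonzero maximal minor $A_J$) is $\mathcal M_{\bar{\mathbf a},v_1}$.
   Context: $B\in\mathbb Z^{g\times n}$ has $B_{i,1}=1$, $B_{i,i+1}=-1$, other entries $0$; $Q=BB^T$. $\bar{\mathbf a}\in\mathbb R^g$ has its first $k-1$ entries equal to $\tfrac{g+1-k}{g+1}$ and the remaining $g+1-k$ entries equal to $-\tfrac{k}{g+1}$ (a vertex of the Voronoi polytope of $Q$). $\mathcal D_{\bar{\mathbf a},Q}=\{\mathbf c\in\mathbb Z^g:\bar{\mathbf a}^TQ\bar{\mathbf a}=(\bar{\mathbf a}-\mathbf c)^TQ(\bar{\mathbf a}-\mathbf c)\}$. $\mathbf s_{\bar{\mathbf a}}\in\{0,1\}^n$ has $j$-th entry $0$ if $(B^T\bar{\mathbf a})_j>0$ and $1$ if $(B^T\bar{\mathbf a})_j<0$. The matroid $\mathcal M_{\bar{\mathbf a},v_1}$ on $[n]$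 has bases $\{I\subset[n],|I|=k:\exists\mathbf c\in\mathcal D_{\bar{\mathbf a},Q}\text{ with }(B^T\mathbf c+\mathbf s_{\bar{\mathbf a}})_i=1\ \forall i\in I\}$. *)

theory Defs
  imports Complex_Main "Jordan_Normal_Form.Determinant"
begin

(* All vectors/matrices are 1-based functions on nat; only indices in the stated ranges matter. *)

definition Bmat :: "nat \<Rightarrow> nat \<Rightarrow> nat \<Rightarrow> int" where
  "Bmat g i j = (if j = 1 then 1 else if j = i + 1 then -1 else 0)"

definition Qmat :: "nat \<Rightarrow> nat \<Rightarrow> nat \<Rightarrow> int" where
  "Qmat g i i' = (\<Sum>j=1..g+1. Bmat g i j * Bmat g i' j)"

definition qform :: "nat \<Rightarrow> (nat \<Rightarrow> real) \<Rightarrow> real" where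
  "qform g x = (\<Sum>i=1..g. \<Sum>i'=1..g. x i * of_int (Qmat g i i') * x i')"

definition abar :: "nat \<Rightarrow> nat \<Rightarrow> nat \<Rightarrow> real" where
  "abar g k i = (if i \<le> k - 1 then (real g + 1 - real k) / (real g + 1) else - real k / (real g + 1))"

definition Dset :: "nat \<Rightarrow> (nat \<Rightarrow> real) \<Rightarrow> (nat \<Rightarrow> int) set" where
  "Dset g a = {c. (\<forall>i. i \<notin> {1..g} \<longrightarrow> c i = 0) \<and>
                  qform g a = qform g (\<lambda>i. a i - of_int (c i))}"

definition BT_real :: "nat \<Rightarrow> (nat \<Rightarrow> real) \<Rightarrow> nat \<Rightarrow> real" where
  "BT_real g x j = (\<Sum>i=1..g. of_int (Bmat g i j) * x i)"

definition BT_int :: "nat \<Rightarrow> (nat \<Rightarrow> int) \<Rightarrow> nat \<Rightarrow> int" where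
  "BT_int g c j = (\<Sum>i=1..g. Bmat g i j * c i)"

(* s_a: j-th entry 0 if (B^T a)_j > 0 and 1 if (B^T a)_j < 0
   (the value 0 is never attained for a = abar) *)
definition svec :: "nat \<Rightarrow> (nat \<Rightarrow> real) \<Rightarrow> nat \<Rightarrow> int" where
  "svec g a j = (if BT_real g a j < 0 then 1 else 0)"

definition M_bases :: "nat \<Rightarrow> nat \<Rightarrow> (nat \<Rightarrow> real) \<Rightarrow> nat set set" where
  "M_bases g k a = {I. I \<subseteq> {1..g+1} \<and> card I = k \<and>
      (\<exists>c \<in> Dset g a. \<forall>i \<in> I. BT_int g c i + svec g a i = 1)}"

definition Amat :: "nat \<Rightarrow> (nat \<Rightarrow> complex) \<Rightarrow> (nat \<Rightarrow> complex) \<Rightarrow> nat \<Rightarrow> nat \<Rightarrow> complex" where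
  "Amat k \<kappa> \<beta> i j =
     (let b = (\<lambda>m. if m = 0 then 1 else \<beta> m) in
      if j \<le> k then (if i = j then 1 else 0)
      else b (i - 1) / (b (j - 1) * (\<kappa> j - \<kappa> i)^2) *
           (\<Prod>l\<in>{1..k} - {i}. (\<kappa> i - \<kappa> l) / (\<kappa> j - \<kappa> l)))"

definition minor_mat :: "nat \<Rightarrow> (nat \<Rightarrow> nat \<Rightarrow> complex) \<Rightarrow> nat set \<Rightarrow> complex mat" where
  "minor_mat k A J = mat k k (\<lambda>(r, c). A (r + 1) (sorted_list_of_set J ! c))"

definition matrix_matroid_bases :: "nat \<Rightarrow> nat \<Rightarrow> (nat \<Rightarrow> nat \<Rightarrow> complex) \<Rightarrow> nat set set" where
  "matrix_matroid_bases k n A = {J. J \<subseteq> {1..n} \<and> card J = k \<and> det (minor_mat k A J) \<noteq> 0}"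

end

theory Submission imports Defs "HOL-Computational_Algebra.Polynomial" begin

lemma qform_eq: "qform g x = (\<Sum>j=1..g+1. (BT_real g x j)^2)"
proof -
  let ?F = "\<lambda>i i' j. x i * of_int (Bmat g i j) * of_int (Bmat g i' j) * x i'"
  have "(\<Sum>j=1..g+1. (BT_real g x j)^2) = (\<Sum>j=1..g+1. \<Sum>i=1..g. \<Sum>i'=1..g. ?F i i' j)"
    unfolding BT_real_def power2_eq_square
    by (simp add: sum_product mult_ac)
  also have "\<dots> = (\<Sum>i=1..g. \<Sum>j=1..g+1. \<Sum>i'=1..g. ?F i i' j)" by (rule sum.swap)
  also have "\<dots> = (\<Sum>i=1..g. \<Sum>i'=1..g. \<Sum>j=1..g+1. ?F i i' j)"
    by (intro sum.cong refl sum.swap)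
  also have "\<dots> = qform g x"
    unfolding qform_def Qmat_def of_int_sum sum_distrib_left sum_distrib_right
    by (intro sum.cong refl) (simp add: mult_ac)
  finally show ?thesis by simp
qed

lemma BT_real_1: "BT_real g x (Suc 0) = (\<Sum>i=1..g. x i)"
  unfolding BT_real_def Bmat_def by simp

lemma BT_real_j: assumes "2 \<le> j" "j \<le> g+1" shows "BT_real g x j = - x (j-1)"
proof -
  have "BT_real g x j = (\<Sum>i=1..g. (if i = j-1 then - x i else 0))"
    unfolding BT_real_def Bmat_def using assms by (intro sum.cong) auto
  also have "\<dots> = - x (j-1)" using assms by (subst sum.delta) auto
  finally show ?thesis .
qed

lemma BT_int_1: "BT_int g x (Suc 0) = (\<Sum>i=1..g. x i)"
  unfolding BT_int_def Bmat_def by simp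

lemma BT_int_j: assumes "2 \<le> j" "j \<le> g+1" shows "BT_int g x j = - x (j-1)"
proof -
  have "BT_int g x j = (\<Sum>i=1..g. (if i = j-1 then - x i else 0))"
    unfolding BT_int_def Bmat_def using assms by (intro sum.cong) auto
  also have "\<dots> = - x (j-1)" using assms by (subst sum.delta) auto
  finally show ?thesis .
qed

lemma BT_lin: "BT_real g (\<lambda>i. x i - of_int (c i)) j = BT_real g x j - of_int (BT_int g c j)"
  unfolding BT_real_def BT_int_def by (simp add: sum_subtractf of_int_sum algebra_simps)

lemma ind_sum: assumes "finite B" "A \<subseteq> B"
  shows "(\<Sum>j\<in>B. (if j \<in> A then 1 else 0) :: 'a::comm_semiring_1) = of_nat (card A)"
proof -
  have "(\<Sum>j\<in>B. (if j \<in> A then 1 else 0) :: 'a) = (\<Sum>j\<in>A. 1)"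
    using assms by (simp add: sum.If_cases Int_absorb1 Int_absorb2 Int_commute)
  thus ?thesis by simp
qed

lemma sq_ind: assumes "S \<subseteq> {1..N}" "card S = k"
  shows "(\<Sum>j=1..N. (r - (if j\<in>S then 1 else 0))^2) = real N * r^2 - 2*r*real k + real k"
proof -
  have "(\<Sum>j=1..N. (r - (if j\<in>S then 1 else 0))^2) =
        (\<Sum>j=1..N. r^2 - 2*r*(if j\<in>S then 1 else 0) + (if j\<in>S then 1 else 0))"
    by (intro sum.cong) (auto simp: power2_eq_square algebra_simps)
  also have "\<dots> = real N * r^2 - 2*r*(\<Sum>j=1..N. (if j\<in>S then 1 else 0)) + (\<Sum>j=1..N. (if j\<in>S then 1 else 0))"
    by (simp add: sum.distrib sum_subtractf sum_distrib_left del: sum.If_cases)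
  also have "(\<Sum>j=1..N. (if j\<in>S then 1 else 0)) = (real k)"
    using ind_sum[of "{1..N}" S] assms by simp
  finally show ?thesis by simp
qed

lemma abar_BT: assumes "1 \<le> k" "k \<le> g" "j \<in> {1..g+1}"
  shows "BT_real g (abar g k) j = real k / (real g + 1) - (if j \<le> k then 1 else 0)"
proof (cases "j = 1")
  case True
  have "(\<Sum>i=1..g. abar g k i) = (\<Sum>i\<in>{1..k-1}. (real g + 1 - real k) / (real g + 1))
      + (\<Sum>i\<in>{k..g}. - real k / (real g + 1))"
  proof -
    have e1: "{1..g} \<inter> {i. i \<le> k - 1} = {1..k-1}" using assms by auto
    have e2: "{1..g} \<inter> - {i. i \<le> k - 1} = {k..g}" using assms by auto
    show ?thesis unfolding abar_def by (subst sum.If_cases) (simp_all only: e1 e2 finite_atLeastAtMost)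
  qed
  also have "\<dots> = real (k-1) * ((real g + 1 - real k) / (real g + 1)) + real (g+1-k) * (- real k / (real g + 1))"
    by simp
  also have "\<dots> = real k / (real g + 1) - 1"
  proof -
    have a: "real (k-1) = real k - 1" "real (g+1-k) = real g + 1 - real k" using assms by auto
    have N: "real g + 1 \<noteq> 0" by simp
    show ?thesis unfolding a using N by (simp add: divide_simps) (simp add: algebra_simps)
  qed
  finally show ?thesis using True assms by (simp add: BT_real_1)
next
  case False
  then have "2 \<le> j" "j \<le> g+1" using assms by auto
  have N: "real g + 1 \<noteq> 0" by simp
  have h: "- ((real g + 1 - real k) / (real g + 1)) = real k / (real g + 1) - 1"
    using N by (simp add: divide_simps)
  show ?thesis using assms \<open>2 \<le> j\<close> \<open>j \<le> g+1\<close> h by (auto simp: BT_real_j abar_def)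
qed

lemma part1: assumes "1 \<le> k" "k \<le> g" "I \<subseteq> {1..g+1}" "card I = k"
  shows "I \<in> M_bases g k (abar g k)"
proof -
  define c :: "nat \<Rightarrow> int" where "c i = (if i \<in> {1..g} then (if i+1 \<le> k then 1 else 0) - (if i+1 \<in> I then 1 else 0) else 0)" for i
  define f :: "nat \<Rightarrow> int" where "f j = (if j \<in> I then 1 else 0) - (if j \<le> k then 1 else 0)" for j
  have fin: "finite I" using assms(3) finite_subset by blast
  have z: "BT_int g c j = f j" if "j \<in> {1..g+1}" for j
  proof (cases "j = 1")
    case True
    have s0: "(\<Sum>j=1..g+1. f j) = 0"
    proof -
      have a: "(\<Sum>j=1..g+1. (if j \<in> I then 1 else 0)::int) = int k"
        using ind_sum[of "{1..g+1}" I, where 'a=int] assms(3,4) by simp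
      have "(\<Sum>j=1..g+1. (if j \<le> k then 1 else 0)::int) = (\<Sum>j=1..g+1. (if j \<in> {1..k} then 1 else 0))"
        by (intro sum.cong) auto
      also have "\<dots> = int k" using ind_sum[of "{1..g+1}" "{1..k}", where 'a=int] assms by simp
      finally have b: "(\<Sum>j=1..g+1. (if j \<le> k then 1 else 0)::int) = int k" .
      have "(\<Sum>j=1..g+1. f j) = 0" unfolding f_def sum_subtractf a b by simp
      then show ?thesis .
    qed
    have "(\<Sum>j=1..g+1. f j) = f 1 + (\<Sum>j=Suc (Suc 0)..g+1. f j)"
      by (simp add: sum.atLeast_Suc_atMost numeral_2_eq_2)
    moreover have "(\<Sum>j=Suc (Suc 0)..g+1. f j) = (\<Sum>i=1..g. f (Suc i))"
      using sum.shift_bounds_cl_Suc_ivl[of f 1 g] by (simp del: sum.cl_ivl_Suc)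
    moreover have "(\<Sum>i=1..g. c i) = - (\<Sum>i=1..g. f (Suc i))"
      unfolding c_def f_def by (simp add: sum_negf[symmetric] del: sum.If_cases)
    ultimately show ?thesis using True s0 by (simp add: BT_int_1)
  next
    case False
    then have "2 \<le> j" "j \<le> g+1" using that by auto
    then show ?thesis by (auto simp: BT_int_j c_def f_def)
  qed
  have y: "BT_real g (abar g k) j = real k / (real g + 1) - (if j \<in> {1..k} then 1 else 0)" if "j \<in> {1..g+1}" for j
    using abar_BT[OF assms(1,2) that] that by auto
  have sv: "svec g (abar g k) j = (if j \<le> k then 1 else 0)" if "j \<in> {1..g+1}" for j
  proof -
    have "real k / (real g + 1) < 1" using assms by (simp add: divide_simps)
    moreover have "real k / (real g + 1) > 0" using assms by simp
    ultimately show ?thesis unfolding svec_def using abar_BT[OF assms(1,2) that] by auto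
  qed
  have q: "qform g (abar g k) = qform g (\<lambda>i. abar g k i - of_int (c i))"
  proof -
    have "qform g (abar g k) = (\<Sum>j=1..g+1. (real k / (real g + 1) - (if j \<in> {1..k} then 1 else 0))^2)"
      unfolding qform_eq using y by (intro sum.cong) auto
    also have "\<dots> = (\<Sum>j=1..g+1. (real k / (real g + 1) - (if j \<in> I then 1 else 0))^2)"
      using sq_ind[of "{1..k}" "g+1" k] sq_ind[OF assms(3,4)] assms by simp
    also have "\<dots> = qform g (\<lambda>i. abar g k i - of_int (c i))"
      unfolding qform_eq BT_lin using y z by (intro sum.cong) (auto simp: f_def)
    finally show ?thesis .
  qed
  have "c \<in> Dset g (abar g k)" unfolding Dset_def using q by (auto simp: c_def)
  moreover have "\<forall>i\<in>I. BT_int g c i + svec g (abar g k) i = 1"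
    using z sv assms(3) by (auto simp: f_def)
  ultimately show ?thesis unfolding M_bases_def using assms by blast
qed


lemma cauchy_kernel:
  fixes a :: "'i \<Rightarrow> complex" and b :: "'j \<Rightarrow> complex" and u :: "'i \<Rightarrow> complex"
  assumes fT: "finite T" and fS: "finite S" and cTS: "card T \<le> card S"
    and ia: "inj_on a T" and ib: "inj_on b S" and dis: "\<forall>t\<in>T. \<forall>i\<in>S. a t \<noteq> b i"
    and eq: "\<forall>i\<in>S. (\<Sum>t\<in>T. u t / (a t - b i)) = 0"
  shows "\<forall>t\<in>T. u t = 0"
proof (cases "T = {}")
  case True then show ?thesis by simp
next
  case False
  define p where "p = (\<Sum>t\<in>T. smult (u t) (\<Prod>t'\<in>T-{t}. [:a t', -1:]))"
  have pp: "poly p x = (\<Sum>t\<in>T. u t * (\<Prod>t'\<in>T-{t}. (a t' - x)))" for x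
    unfolding p_def by (simp add: poly_sum poly_prod)
  have "degree p \<le> card T - 1"
    unfolding p_def
  proof (rule degree_sum_le[OF fT])
    fix t assume t: "t \<in> T"
    have "degree (\<Prod>t'\<in>T-{t}. [:a t', -1:]) \<le> (\<Sum>t'\<in>T-{t}. degree [:a t', -1:])"
      using degree_prod_sum_le[of "T-{t}" "\<lambda>t'. [:a t', -1:]"] fT by (simp add: o_def)
    also have "\<dots> = card (T - {t})" by simp
    also have "\<dots> = card T - 1" using t fT by simp
    finally show "degree (smult (u t) (\<Prod>t'\<in>T-{t}. [:a t', -1:])) \<le> card T - 1"
      using degree_smult_le order_trans by blast
  qed
  moreover have "card T > 0" using False fT by auto
  ultimately have dlt: "degree p < card (b ` S)"
    using cTS card_image[OF ib] by linarith
  have roots: "poly p x = poly 0 x" if xS: "x \<in> b ` S" for x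
  proof -
    obtain i where i: "i \<in> S" "x = b i" using xS by auto
    have nz: "a t - x \<noteq> 0" if "t \<in> T" for t using dis i that by auto
    have "poly p x = (\<Sum>t\<in>T. (\<Prod>t'\<in>T. (a t' - x)) * (u t / (a t - x)))"
    proof -
      have "u t * (\<Prod>t'\<in>T-{t}. (a t' - x)) = (\<Prod>t'\<in>T. (a t' - x)) * (u t / (a t - x))" if "t \<in> T" for t
      proof -
        have e: "(\<Prod>t'\<in>T. (a t' - x)) = (a t - x) * (\<Prod>t'\<in>T-{t}. (a t' - x))"
          using prod.remove[OF fT that, of "\<lambda>t'. a t' - x"] by simp
        have n: "a t - x \<noteq> 0" using nz[OF that] .
        show ?thesis unfolding e using n by (simp add: divide_simps)
      qed
      then show ?thesis unfolding pp by (intro sum.cong) auto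
    qed
    also have "\<dots> = (\<Prod>t'\<in>T. (a t' - x)) * (\<Sum>t\<in>T. u t / (a t - x))"
      by (simp add: sum_distrib_left)
    also have "\<dots> = 0" using eq i by simp
    finally show ?thesis by simp
  qed
  have p0: "p = 0"
    by (rule poly_eqI_degree[OF roots]) (use dlt in auto)
  show ?thesis
  proof
    fix t assume t: "t \<in> T"
    have "0 = poly p (a t)" using p0 by simp
    also have "\<dots> = u t * (\<Prod>t'\<in>T-{t}. (a t' - a t)) + (\<Sum>s\<in>T-{t}. u s * (\<Prod>t'\<in>T-{s}. (a t' - a t)))"
      unfolding pp using sum.remove[OF fT t] by simp
    also have "(\<Sum>s\<in>T-{t}. u s * (\<Prod>t'\<in>T-{s}. (a t' - a t))) = 0"
    proof (intro sum.neutral ballI)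
      fix s assume s: "s \<in> T - {t}"
      have "(\<Prod>t'\<in>T-{s}. (a t' - a t)) = 0"
        using fT t s by (intro prod_zero) auto
      then show "u s * (\<Prod>t'\<in>T-{s}. (a t' - a t)) = 0" by simp
    qed
    finally have "u t * (\<Prod>t'\<in>T-{t}. (a t' - a t)) = 0" by simp
    moreover have "(\<Prod>t'\<in>T-{t}. (a t' - a t)) \<noteq> 0"
      using fT ia t by (auto simp: inj_on_def)
    ultimately show "u t = 0" by simp
  qed
qed

lemma kernel:
  assumes kg: "k \<le> g" and ik: "inj_on \<kappa> {1..g+1}" and bnz: "\<forall>j\<in>{1..g}. \<beta> j \<noteq> 0"
    and iphi: "inj_on \<phi> {..<k}" and rphi: "\<phi> ` {..<k} \<subseteq> {1..g+1}"
    and eqs: "\<forall>i\<in>{1..k}. (\<Sum>c<k. Amat k \<kappa> \<beta> i (\<phi> c) * u c) = 0"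
  shows "\<forall>c<k. u c = 0"
proof -
  define bb where "bb m = (if m = 0 then 1 else \<beta> m)" for m
  define D where "D i = (\<Prod>l\<in>{1..k}-{i}. \<kappa> i - \<kappa> l)" for i
  define P where "P j = (\<Prod>l\<in>{1..k}. \<kappa> j - \<kappa> l)" for j
  have kdist: "\<kappa> x \<noteq> \<kappa> y" if "x \<in> {1..g+1}" "y \<in> {1..g+1}" "x \<noteq> y" for x y
    using ik that by (auto simp: inj_on_def)
  have bbnz: "bb m \<noteq> 0" if "m \<le> g" for m using bnz that by (auto simp: bb_def)
  have Dnz: "D i \<noteq> 0" if "i \<in> {1..k}" for i
  proof -
    have "\<kappa> i - \<kappa> l \<noteq> 0" if "l \<in> {1..k}-{i}" for l
      using kdist[of i l] that \<open>i \<in> {1..k}\<close> kg by auto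
    then show ?thesis unfolding D_def by (subst prod_zero_iff) auto
  qed
  have Pnz: "P j \<noteq> 0" if "j \<in> {k+1..g+1}" for j
  proof -
    have "\<kappa> j - \<kappa> l \<noteq> 0" if "l \<in> {1..k}" for l
      using kdist[of j l] that \<open>j \<in> {k+1..g+1}\<close> kg by auto
    then show ?thesis unfolding P_def by (subst prod_zero_iff) auto
  qed
  have Af: "Amat k \<kappa> \<beta> i j = bb (i-1) * D i / (bb (j-1) * P j * (\<kappa> j - \<kappa> i))"
    if ij: "i \<in> {1..k}" "j \<in> {k+1..g+1}" for i j
  proof -
    have n1: "\<kappa> j - \<kappa> i \<noteq> 0" using kdist[of j i] ij kg by auto
    have n2: "bb (j-1) \<noteq> 0" using ij by (intro bbnz) auto
    have Pe: "P j = (\<kappa> j - \<kappa> i) * (\<Prod>l\<in>{1..k}-{i}. \<kappa> j - \<kappa> l)"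
      unfolding P_def using prod.remove[of "{1..k}" i "\<lambda>l. \<kappa> j - \<kappa> l"] ij by simp
    have "Amat k \<kappa> \<beta> i j = bb (i-1) / (bb (j-1) * (\<kappa> j - \<kappa> i)^2) *
           (D i / (\<Prod>l\<in>{1..k}-{i}. \<kappa> j - \<kappa> l))"
      unfolding Amat_def Let_def D_def using ij by (simp add: bb_def prod_dividef)
    also have "\<dots> = bb (i-1) * D i / (bb (j-1) * P j * (\<kappa> j - \<kappa> i))"
      unfolding Pe using n1 n2 by (simp add: power2_eq_square field_simps)
    finally show ?thesis .
  qed
  have Ad: "Amat k \<kappa> \<beta> i j = (if i = j then 1 else 0)" if "j \<le> k" for i j
    unfolding Amat_def Let_def using that by simp
  define T where "T = {c. c < k \<and> k < \<phi> c}"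
  define N where "N = {c. c < k \<and> \<phi> c \<le> k}"
  define S where "S = {1..k} - \<phi> ` {..<k}"
  define u' where "u' c = u c / (bb (\<phi> c - 1) * P (\<phi> c))" for c
  have phiT: "\<phi> c \<in> {k+1..g+1}" if "c \<in> T" for c using that rphi unfolding T_def by auto
  have fT: "finite T" unfolding T_def by auto
  have cardT: "card T \<le> card S"
  proof -
    have U: "{..<k} = T \<union> N" "T \<inter> N = {}" unfolding T_def N_def by auto
    have "card T + card N = card (T \<union> N)" using U(2) by (intro card_Un_disjoint[symmetric]) (auto simp: T_def N_def)
    then have "card T + card N = k" unfolding U(1)[symmetric] by simp
    moreover have "\<phi> ` {..<k} \<inter> {1..k} = \<phi> ` N" using rphi unfolding N_def by auto
    moreover have "card (\<phi> ` N) = card N"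
      by (rule card_image, rule inj_on_subset[OF iphi]) (auto simp: N_def)
    moreover have "card S = k - card (\<phi> ` {..<k} \<inter> {1..k})"
      unfolding S_def by (subst card_Diff_subset_Int) (auto simp: Int_commute)
    ultimately show ?thesis by simp
  qed
  have cau: "\<forall>i\<in>S. (\<Sum>c\<in>T. u' c / (\<kappa> (\<phi> c) - \<kappa> i)) = 0"
  proof
    fix i assume iS: "i \<in> S"
    then have i1: "i \<in> {1..k}" unfolding S_def by auto
    have "0 = (\<Sum>c<k. Amat k \<kappa> \<beta> i (\<phi> c) * u c)" using eqs i1 by simp
    also have "\<dots> = (\<Sum>c\<in>T. Amat k \<kappa> \<beta> i (\<phi> c) * u c)"
    proof (rule sum.mono_neutral_right)
      show "\<forall>c\<in>{..<k} - T. Amat k \<kappa> \<beta> i (\<phi> c) * u c = 0"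
      proof
        fix c assume c: "c \<in> {..<k} - T"
        then have "\<phi> c \<le> k" "\<phi> c \<noteq> i" using iS unfolding T_def S_def by auto
        then show "Amat k \<kappa> \<beta> i (\<phi> c) * u c = 0" using Ad by simp
      qed
    qed (auto simp: T_def)
    also have "\<dots> = (\<Sum>c\<in>T. bb (i-1) * D i * (u' c / (\<kappa> (\<phi> c) - \<kappa> i)))"
    proof (rule sum.cong[OF refl])
      fix c assume c: "c \<in> T"
      show "Amat k \<kappa> \<beta> i (\<phi> c) * u c = bb (i-1) * D i * (u' c / (\<kappa> (\<phi> c) - \<kappa> i))"
        unfolding Af[OF i1 phiT[OF c]] u'_def by (simp add: field_simps)
    qed
    also have "\<dots> = bb (i-1) * D i * (\<Sum>c\<in>T. u' c / (\<kappa> (\<phi> c) - \<kappa> i))"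
      by (simp add: sum_distrib_left)
    finally have fin: "0 = bb (i-1) * D i * (\<Sum>c\<in>T. u' c / (\<kappa> (\<phi> c) - \<kappa> i))" .
    have "bb (i-1) \<noteq> 0" using i1 kg by (intro bbnz) auto
    then show "(\<Sum>c\<in>T. u' c / (\<kappa> (\<phi> c) - \<kappa> i)) = 0" using Dnz[OF i1] fin by simp
  qed
  have uT: "\<forall>c\<in>T. u' c = 0"
  proof (rule cauchy_kernel[OF fT _ cardT _ _ _ cau])
    show "finite S" unfolding S_def by auto
    show "inj_on (\<lambda>c. \<kappa> (\<phi> c)) T"
    proof (rule inj_onI)
      fix x y assume xy: "x \<in> T" "y \<in> T" "\<kappa> (\<phi> x) = \<kappa> (\<phi> y)"
      then have "\<phi> x = \<phi> y" using kdist[of "\<phi> x" "\<phi> y"] phiT[OF xy(1)] phiT[OF xy(2)] kg by fastforce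
      then show "x = y" using iphi xy(1,2) unfolding T_def inj_on_def by auto
    qed
    show "inj_on \<kappa> S" using kg unfolding S_def by (intro inj_on_subset[OF ik]) auto
    show "\<forall>t\<in>T. \<forall>i\<in>S. \<kappa> (\<phi> t) \<noteq> \<kappa> i"
    proof (intro ballI)
      fix t i assume "t \<in> T" "i \<in> S"
      then show "\<kappa> (\<phi> t) \<noteq> \<kappa> i" using phiT[of t] kg kdist[of "\<phi> t" i] unfolding S_def by auto
    qed
  qed
  have uT': "u c = 0" if "c \<in> T" for c
  proof -
    have "bb (\<phi> c - 1) * P (\<phi> c) \<noteq> 0" using phiT[OF that] bbnz Pnz by auto
    then show ?thesis using uT that unfolding u'_def by auto
  qed
  show ?thesis
  proof (intro allI impI)
    fix c0 assume c0: "c0 < k"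
    show "u c0 = 0"
    proof (cases "c0 \<in> T")
      case True then show ?thesis using uT' by simp
    next
      case False
      then have pk: "\<phi> c0 \<le> k" using c0 unfolding T_def by auto
      have p1: "\<phi> c0 \<in> {1..k}" using pk rphi c0 by auto
      have "0 = (\<Sum>c<k. Amat k \<kappa> \<beta> (\<phi> c0) (\<phi> c) * u c)" using eqs p1 by simp
      also have "\<dots> = Amat k \<kappa> \<beta> (\<phi> c0) (\<phi> c0) * u c0 + (\<Sum>c\<in>{..<k}-{c0}. Amat k \<kappa> \<beta> (\<phi> c0) (\<phi> c) * u c)"
        using sum.remove[of "{..<k}" c0] c0 by simp
      also have "(\<Sum>c\<in>{..<k}-{c0}. Amat k \<kappa> \<beta> (\<phi> c0) (\<phi> c) * u c) = 0"
      proof (rule sum.neutral, rule ballI)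
        fix c assume c: "c \<in> {..<k} - {c0}"
        show "Amat k \<kappa> \<beta> (\<phi> c0) (\<phi> c) * u c = 0"
        proof (cases "c \<in> T")
          case True then show ?thesis using uT' by simp
        next
          case False
          then have "\<phi> c \<le> k" using c unfolding T_def by auto
          moreover have "\<phi> c \<noteq> \<phi> c0" using iphi c c0 by (auto simp: inj_on_def)
          ultimately show ?thesis using Ad by simp
        qed
      qed
      finally show ?thesis using Ad[OF pk] by simp
    qed
  qed
qed

lemma det_nz:
  assumes kg: "k \<le> g" and ik: "inj_on \<kappa> {1..g+1}" and bnz: "\<forall>j\<in>{1..g}. \<beta> j \<noteq> 0"
    and J: "J \<subseteq> {1..g+1}" "card J = k"
  shows "det (minor_mat k (Amat k \<kappa> \<beta>) J) \<noteq> 0"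
proof
  assume d: "det (minor_mat k (Amat k \<kappa> \<beta>) J) = 0"
  define js where "js = sorted_list_of_set J"
  have fJ: "finite J" using J(1) finite_subset by blast
  have len: "length js = k" and dist: "distinct js" and sj: "set js = J"
    using fJ J(2) unfolding js_def by auto
  have M: "minor_mat k (Amat k \<kappa> \<beta>) J \<in> carrier_mat k k" by (simp add: minor_mat_def)
  obtain v where v: "v \<in> carrier_vec k" "v \<noteq> 0\<^sub>v k" "minor_mat k (Amat k \<kappa> \<beta>) J *\<^sub>v v = 0\<^sub>v k"
    using d det_0_iff_vec_prod_zero[OF M] by blast
  have eqs: "\<forall>i\<in>{1..k}. (\<Sum>c<k. Amat k \<kappa> \<beta> i (js ! c) * v $ c) = 0"
  proof
    fix i assume i: "i \<in> {1..k}"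
    have "(minor_mat k (Amat k \<kappa> \<beta>) J *\<^sub>v v) $ (i-1) = 0"
    proof -
      have "i - 1 < k" using i by auto
      then show ?thesis using v(3) by simp
    qed
    then show "(\<Sum>c<k. Amat k \<kappa> \<beta> i (js ! c) * v $ c) = 0"
    proof -
      have i1: "i - 1 < k" "Suc (i - 1) = i" using i by auto
      have "(minor_mat k (Amat k \<kappa> \<beta>) J *\<^sub>v v) $ (i-1) = (\<Sum>c<k. Amat k \<kappa> \<beta> i (js ! c) * v $ c)"
        using i1 v(1) unfolding js_def minor_mat_def
        by (simp add: index_mult_mat_vec scalar_prod_def lessThan_atLeast0 row_def)
      with \<open>(_ *\<^sub>v v) $ (i-1) = 0\<close> show ?thesis by simp
    qed
  qed
  have "\<forall>c<k. v $ c = 0"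
  proof (rule kernel[OF kg ik bnz _ _ eqs])
    show "inj_on ((!) js) {..<k}" using inj_on_nth[OF dist] len by auto
    show "(!) js ` {..<k} \<subseteq> {1..g+1}" using J(1) sj len nth_mem by fastforce
  qed
  then have "v = 0\<^sub>v k" using v(1) by (intro eq_vecI) auto
  with v(2) show False by simp
qed

theorem corollary5p4:
  fixes g k :: nat and \<kappa> \<beta> :: "nat \<Rightarrow> complex"
  assumes "g \<ge> 1"
    and "1 \<le> k" and "k \<le> g"
    and "inj_on \<kappa> {1..g+1}"
    and "\<forall>j\<in>{1..g}. \<beta> j \<noteq> 0"
  shows "matrix_matroid_bases k (g+1) (Amat k \<kappa> \<beta>) = M_bases g k (abar g k)"
proof
  show "matrix_matroid_bases k (g+1) (Amat k \<kappa> \<beta>) \<subseteq> M_bases g k (abar g k)"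
    unfolding matrix_matroid_bases_def using part1[OF assms(2,3)] by blast
  show "M_bases g k (abar g k) \<subseteq> matrix_matroid_bases k (g+1) (Amat k \<kappa> \<beta>)"
    unfolding matrix_matroid_bases_def M_bases_def using det_nz[OF assms(3,4,5)] by blast
qed

end
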